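(* Let $J$ be an ideal of $\widetilde{\mathbb{K}}_{sm}$ and $x\in J$. Then $|x|\in J$.
   Context: Let $I=(0,1]$ and $\mathbb{K}\in\{\mathbb{R},\mathbb{C}\}$. $\widetilde{\mathbb{K}}_{sm}=\mathcal{E}_{M,sm}/\mathcal{N}_{sm}$ where $\mathcal{E}_{M,sm}$ is the set of nets $(r_\varepsilon)_{\varepsilon\in I}\in\mathbb{K}^I$ smooth in $\varepsilon$ with $|r_\varepsilon|=O(\varepsilon^{-N})$ for some $N$, and $\mathcal{N}_{sm}$ those with $|r_\varepsilon|=O(\varepsilon^m)$ for all $m$; $\widetilde{\mathbb{K}}_{co}$ is defined analogously with continuous nets, and $\tau_{sm}:\widetilde{\mathbb{K}}_{sm}\to\widetilde{\mathbb{K}}_{co}$, $[(r_\varepsilon)]\mapsto[(r_\varepsilon)]$, is a ring isomorphism. For $x=[(x_\varepsilon)_\varepsilon]\in\widetilde{\mathbb{K}}_{sm}$, $|x|:=\tau_{sm}^{-1}([(|x_\varepsilon|)_\varepsilon])$. *)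

theory Defs
  imports "HOL-Analysis.Analysis" "HOL-Algebra.Ideal"
begin

text \<open>Nets are functions real => 'a; only their values on I = (0,1] matter.
  The scalar field K is a real normed field (by Gelfand-Mazur/Ostrowski these are exactly R and C).\<close>

definition I_eps :: "real set" where "I_eps = {0<..1}"

definition smooth_net :: "(real \<Rightarrow> 'a::real_normed_vector) \<Rightarrow> bool" where
  "smooth_net r \<longleftrightarrow> (\<exists>D :: nat \<Rightarrow> real \<Rightarrow> 'a.
      (\<forall>t\<in>I_eps. D 0 t = r t) \<and>
      (\<forall>k. \<forall>t\<in>I_eps. (D k has_vector_derivative D (Suc k) t) (at t within I_eps)))"

definition moderate_net :: "(real \<Rightarrow> 'a::real_normed_vector) \<Rightarrow> bool" where
  "moderate_net r \<longleftrightarrow> (\<exists>N::nat. \<exists>C. \<exists>e0>0. \<forall>e\<in>{0<..e0}. e \<le> 1 \<longrightarrow> norm (r e) \<le> C * (1 / e) ^ N)"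

definition negligible_net :: "(real \<Rightarrow> 'a::real_normed_vector) \<Rightarrow> bool" where
  "negligible_net r \<longleftrightarrow> (\<forall>m::nat. \<exists>C. \<exists>e0>0. \<forall>e\<in>{0<..e0}. e \<le> 1 \<longrightarrow> norm (r e) \<le> C * e ^ m)"

definition EM_sm :: "(real \<Rightarrow> 'a::real_normed_field) set" where
  "EM_sm = {r. smooth_net r \<and> moderate_net r}"

definition EM_co :: "(real \<Rightarrow> 'a::real_normed_field) set" where
  "EM_co = {r. continuous_on I_eps r \<and> moderate_net r}"

definition rel_sm :: "((real \<Rightarrow> 'a::real_normed_field) \<times> (real \<Rightarrow> 'a)) set" where
  "rel_sm = {(r, s). r \<in> EM_sm \<and> s \<in> EM_sm \<and> negligible_net (\<lambda>e. r e - s e)}"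

definition rel_co :: "((real \<Rightarrow> 'a::real_normed_field) \<times> (real \<Rightarrow> 'a)) set" where
  "rel_co = {(r, s). r \<in> EM_co \<and> s \<in> EM_co \<and> negligible_net (\<lambda>e. r e - s e)}"

definition cls_sm :: "(real \<Rightarrow> 'a::real_normed_field) \<Rightarrow> (real \<Rightarrow> 'a) set" where
  "cls_sm r = rel_sm `` {r}"

definition cls_co :: "(real \<Rightarrow> 'a::real_normed_field) \<Rightarrow> (real \<Rightarrow> 'a) set" where
  "cls_co r = rel_co `` {r}"

definition rep :: "(real \<Rightarrow> 'a) set \<Rightarrow> real \<Rightarrow> 'a" where
  "rep X = (SOME r. r \<in> X)"

definition Ksm :: "(real \<Rightarrow> 'a::real_normed_field) set ring" where
  "Ksm = \<lparr> carrier = EM_sm // rel_sm,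
           mult = (\<lambda>X Y. cls_sm (\<lambda>e. rep X e * rep Y e)),
           one = cls_sm (\<lambda>_. 1),
           zero = cls_sm (\<lambda>_. 0),
           add = (\<lambda>X Y. cls_sm (\<lambda>e. rep X e + rep Y e)) \<rparr>"

definition tau_sm :: "(real \<Rightarrow> 'a::real_normed_field) set \<Rightarrow> (real \<Rightarrow> 'a) set" where
  "tau_sm X = cls_co (rep X)"

definition abs_sm :: "(real \<Rightarrow> 'a::real_normed_field) set \<Rightarrow> (real \<Rightarrow> 'a) set" where
  "abs_sm x = (THE y. y \<in> carrier Ksm \<and> tau_sm y = cls_co (\<lambda>e. of_real (norm (rep x e))))"

end

theory Submission
  imports Defs "HOL-Computational_Algebra.Polynomial"
begin


definition wf :: "real \<Rightarrow> real" where "wf s = s - s^2"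

definition phi :: "real poly \<Rightarrow> nat \<Rightarrow> real \<Rightarrow> real" where
  "phi P n s = (if 0 < s \<and> s < 1 then poly P s * exp (- 1 / wf s) / wf s ^ n else 0)"

definition nxt :: "real poly \<Rightarrow> nat \<Rightarrow> real poly" where
  "nxt P n = pderiv P * [:0,1,-1:]^2 - smult (of_nat n) (P * [:1,-2:] * [:0,1,-1:]) + P * [:1,-2:]"

lemma poly_W: "poly [:0,1,-1:] s = wf s" by (simp add: wf_def power2_eq_square algebra_simps)
lemma poly_W2: "poly [:1, - 2:] s = 1 - 2 * (s::real)" by simp

lemma alg1:
  fixes w E p p' a :: real
  assumes "w > 0" "b = - a"
  shows "((p' * E - E * b * p / (w * w)) * w ^ n - p * E * (real n * (a * w ^ (n - Suc 0)))) / (w ^ n * w ^ n)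
     = (p' * w^2 - real n * p * a * w + p * a) * E / (w * (w * w ^ n))"
proof (cases n)
  case 0 then show ?thesis using assms by (simp add: field_simps power2_eq_square)
next
  case (Suc m) then show ?thesis using assms by (simp add: field_simps power2_eq_square)
qed

lemma poly_nxt: "poly (nxt P n) s = poly (pderiv P) s * (s - s^2)^2 - real n * poly P s * (1 - 2 * s) * (s - s^2) + poly P s * (1 - 2 * s)"
  unfolding nxt_def by (simp add: poly_W[unfolded wf_def] algebra_simps power2_eq_square)

lemma phi_deriv_inner:
  assumes s: "0 < s" "s < 1"
  shows "((\<lambda>s. poly P s * exp (- 1 / wf s) / wf s ^ n) has_real_derivative
          poly (nxt P n) s * exp (- 1 / wf s) / wf s ^ (n+2)) (at s)"
proof -
  have w: "wf s > 0" using s by (simp add: wf_def power2_eq_square algebra_simps mult_pos_pos)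
  show ?thesis
    using w unfolding wf_def
    apply (auto intro!: derivative_eq_intros)
    apply (subst alg1[where a="1 - 2 * s"])
    apply (auto simp: poly_nxt)
    done
qed
lemma exp_lower:
  fixes x :: real assumes "0 \<le> x"
  shows "x ^ k / fact k \<le> exp x"
proof -
  obtain t where t: "exp x = (\<Sum>m<Suc k. x ^ m / fact m) + exp t / fact (Suc k) * x ^ (Suc k)"
    using Maclaurin_exp_le[of x "Suc k"] by blast
  have "x ^ k / fact k \<le> (\<Sum>m<Suc k. x ^ m / fact m)"
    using assms by (intro member_le_sum) auto
  moreover have "0 \<le> exp t / fact (Suc k) * x ^ (Suc k)" using assms by simp
  ultimately show ?thesis using t by linarith
qed

lemma zero_deriv_sq:
  fixes f :: "real \<Rightarrow> real"
  assumes "\<And>t. \<bar>f t\<bar> \<le> K * (t - a)^2"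
  shows "(f has_real_derivative 0) (at a)"
proof -
  have fa: "f a = 0" using assms[of a] by simp
  have "((\<lambda>y. (f y - f a) / (y - a)) \<longlongrightarrow> 0) (at a)"
  proof (rule Lim_null_comparison)
    show "\<forall>\<^sub>F y in at a. norm ((f y - f a) / (y - a)) \<le> \<bar>K\<bar> * \<bar>y - a\<bar>"
    proof (rule eventually_at_filter[THEN iffD2], rule always_eventually, intro allI impI)
      fix y assume "y \<noteq> a"
      hence d: "\<bar>y - a\<bar> > 0" by simp
      have "\<bar>f y\<bar> \<le> K * (y - a)^2" by (rule assms)
      also have "\<dots> \<le> \<bar>K\<bar> * (y - a)^2" by (intro mult_right_mono) auto
      also have "\<dots> = \<bar>K\<bar> * \<bar>y - a\<bar> * \<bar>y - a\<bar>" by (simp add: power2_eq_square abs_mult_self_eq)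
      finally have "\<bar>f y\<bar> \<le> \<bar>K\<bar> * \<bar>y - a\<bar> * \<bar>y - a\<bar>" .
      thus "norm ((f y - f a) / (y - a)) \<le> \<bar>K\<bar> * \<bar>y - a\<bar>"
        using d fa by (simp add: divide_le_eq abs_divide)
    qed
    show "((\<lambda>y. \<bar>K\<bar> * \<bar>y - a\<bar>) \<longlongrightarrow> 0) (at a)"
      by (rule tendsto_eq_intros refl | simp)+
  qed
  thus ?thesis by (simp add: has_field_derivative_iff)
qed

lemma wf_pos: "0 < s \<Longrightarrow> s < 1 \<Longrightarrow> 0 < wf s"
  by (simp add: wf_def power2_eq_square algebra_simps mult_pos_pos)

lemma inv_bound:
  fixes u F X :: real
  assumes "0 < u" "0 < F" "u ^ k / F \<le> X"
  shows "1 / X \<le> F / u ^ k"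
proof -
  have p: "0 < u ^ k / F" using assms by simp
  hence X: "0 < X" using assms(3) by linarith
  have "0 < u ^ k" using assms by simp
  thus ?thesis using assms(2,3) X by (simp add: field_simps)
qed

lemma phi_bound:
  "\<exists>K. \<forall>s. \<bar>phi P n s\<bar> \<le> K * s^2 \<and> \<bar>phi P n s\<bar> \<le> K * (s - 1)^2"
proof -
  have "compact (poly P ` {0..1})" by (intro compact_continuous_image continuous_intros) auto
  then obtain M where M: "\<And>s. s \<in> {0..1} \<Longrightarrow> \<bar>poly P s\<bar> \<le> M"
    using compact_imp_bounded[THEN bounded_pos[THEN iffD1]] by force
  define K where "K = M * fact (n+2)"
  have "\<bar>phi P n s\<bar> \<le> K * s^2 \<and> \<bar>phi P n s\<bar> \<le> K * (s - 1)^2" for s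
  proof (cases "0 < s \<and> s < 1")
    case True
    let ?w = "wf s"
    have w: "?w > 0" using True wf_pos by auto
    have x: "(1 / ?w) ^ (n+2) / fact (n+2) \<le> exp (1 / ?w)" using w by (intro exp_lower) auto
    have e: "exp (- 1 / ?w) \<le> fact (n+2) * ?w ^ (n+2)"
    proof -
      have "exp (- 1 / ?w) = 1 / exp (1 / ?w)" by (simp add: exp_minus divide_inverse)
      also have "\<dots> \<le> fact (n+2) / (1 / ?w) ^ (n+2)"
        by (rule inv_bound[OF _ _ x]) (use w in auto)
      also have "\<dots> = fact (n+2) * ?w ^ (n+2)" by (simp add: power_one_over)
      finally show ?thesis .
    qed
    have Mp: "\<bar>poly P s\<bar> \<le> M" using True M by auto
    have M0: "0 \<le> M" using Mp by linarith
    have "\<bar>phi P n s\<bar> = \<bar>poly P s\<bar> * exp (- 1 / ?w) / ?w ^ n"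
      using True w by (simp add: phi_def abs_mult)
    also have "\<dots> \<le> M * (fact (n+2) * ?w ^ (n+2)) / ?w ^ n"
      using w Mp e by (intro divide_right_mono mult_mono) auto
    also have "\<dots> = K * ?w^2" using w unfolding K_def power_add by (simp add: power2_eq_square)
    finally have a: "\<bar>phi P n s\<bar> \<le> K * ?w^2" .
    have K0: "K \<ge> 0" using M0 by (simp add: K_def)
    have "0 \<le> (1 - s)^2" by simp
    hence "?w \<le> s" "?w \<le> 1 - s" using True by (auto simp: wf_def power2_eq_square algebra_simps)
    hence "?w^2 \<le> s^2" "?w^2 \<le> (s - 1)^2" using w True
      by (auto intro!: power_mono simp: power2_commute[of s 1])
    thus ?thesis using a K0 by (meson mult_left_mono order_trans)
  next
    case False
    then show ?thesis using M[of 0] unfolding K_def phi_def by auto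
  qed
  thus ?thesis by blast
qed

lemma phi_deriv: "(phi P n has_real_derivative phi (nxt P n) (n+2) s) (at s)"
proof -
  consider "0 < s \<and> s < 1" | "s < 0" | "s > 1" | "s = 0" | "s = 1" by linarith
  thus ?thesis
  proof cases
    case 1
    have "(phi P n has_real_derivative poly (nxt P n) s * exp (- 1 / wf s) / wf s ^ (n+2)) (at s)"
    proof (rule has_field_derivative_transform_within_open[OF phi_deriv_inner[of s P n], where S="{0<..<1}"])
      show "\<And>x. x \<in> {0<..<1} \<Longrightarrow> poly P x * exp (- 1 / wf x) / wf x ^ n = phi P n x"
        by (simp add: phi_def)
    qed (use 1 in \<open>auto simp: phi_def\<close>)
    thus ?thesis using 1 by (simp add: phi_def)
  next
    case 2
    have "((\<lambda>_. 0) has_real_derivative 0) (at s)" by simp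
    hence "(phi P n has_real_derivative 0) (at s)"
      by (rule has_field_derivative_transform_within_open[where S="{..<0}"]) (use 2 in \<open>auto simp: phi_def\<close>)
    thus ?thesis using 2 by (simp add: phi_def)
  next
    case 3
    have "((\<lambda>_. 0) has_real_derivative 0) (at s)" by simp
    hence "(phi P n has_real_derivative 0) (at s)"
      by (rule has_field_derivative_transform_within_open[where S="{1<..}"]) (use 3 in \<open>auto simp: phi_def\<close>)
    thus ?thesis using 3 by (simp add: phi_def)
  next
    case 4
    obtain K where K: "\<forall>t. \<bar>phi P n t\<bar> \<le> K * t^2 \<and> \<bar>phi P n t\<bar> \<le> K * (t - 1)^2"
      using phi_bound by blast
    have "(phi P n has_real_derivative 0) (at 0)" by (rule zero_deriv_sq[of _ K]) (use K in auto)
    thus ?thesis using 4 by (simp add: phi_def)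
  next
    case 5
    obtain K where K: "\<forall>t. \<bar>phi P n t\<bar> \<le> K * t^2 \<and> \<bar>phi P n t\<bar> \<le> K * (t - 1)^2"
      using phi_bound by blast
    have "(phi P n has_real_derivative 0) (at 1)" by (rule zero_deriv_sq[of _ K]) (use K in auto)
    thus ?thesis using 5 by (simp add: phi_def)
  qed
qed

primrec PP :: "nat \<Rightarrow> real poly \<times> nat" where
  "PP 0 = (1, 0)"
| "PP (Suc k) = (nxt (fst (PP k)) (snd (PP k)), snd (PP k) + 2)"

definition B :: "nat \<Rightarrow> real \<Rightarrow> real" where
  "B k = phi (fst (PP k)) (snd (PP k))"

lemma B_deriv: "(B k has_real_derivative B (Suc k) s) (at s)"
  using phi_deriv[of "fst (PP k)" "snd (PP k)" s] by (simp add: B_def)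

lemma B_out: "s \<le> 0 \<or> 1 \<le> s \<Longrightarrow> B k s = 0"
  unfolding B_def phi_def by auto

lemma B0: "B 0 s = (if 0 < s \<and> s < 1 then exp (- 1 / wf s) else 0)"
  unfolding B_def phi_def by simp

lemma B0_nonneg: "0 \<le> B 0 s" by (simp add: B0)

lemma B_cont: "continuous_on A (B k)"
  using B_deriv DERIV_isCont continuous_at_imp_continuous_on by blast

lemma B_int: "B k integrable_on {a..b}"
  by (rule integrable_continuous_real[OF B_cont])

lemma B0_lower: "s \<in> {1/4..3/4} \<Longrightarrow> exp (-6) \<le> B 0 s"
proof -
  assume s: "s \<in> {1/4..3/4}"
  have "0 \<le> (s - 1/4) * (3/4 - s)" using s by (intro mult_nonneg_nonneg) auto
  moreover have "(s - 1/4) * (3/4 - s) = wf s - 3/16" by (simp add: wf_def power2_eq_square field_simps)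
  ultimately have w: "3/16 \<le> wf s" by linarith
  have "1 / wf s \<le> 1 / (3/16)" using w by (intro divide_left_mono) auto
  hence "- 6 \<le> - 1 / wf s" by simp
  thus ?thesis using s by (simp add: B0)
qed

definition K0 :: real where "K0 = integral {0..1} (B 0)"

lemma int_zero: "(\<And>x. x \<in> {a..b} \<Longrightarrow> f x = 0) \<Longrightarrow> integral {a..b} f = (0::real)"
proof -
  assume "\<And>x. x \<in> {a..b} \<Longrightarrow> f x = 0"
  hence "integral {a..b} f = integral {a..b} (\<lambda>_. 0::real)" by (intro integral_cong) auto
  thus ?thesis by simp
qed

lemma K0_pos: "K0 > 0"
proof -
  have a: "integral {0..1/4} (B 0) \<ge> 0" by (rule integral_nonneg[OF B_int]) (simp add: B0_nonneg)
  have c: "integral {3/4..1} (B 0) \<ge> 0" by (rule integral_nonneg[OF B_int]) (simp add: B0_nonneg)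
  have "integral {1/4..3/4::real} (\<lambda>_. exp (-6)) \<le> integral {1/4..3/4} (B 0)"
    by (rule integral_le) (auto intro: B_int B0_lower)
  hence b: "exp (-6) / 2 \<le> integral {1/4..3/4} (B 0)" by simp
  have "K0 = integral {0..1/4} (B 0) + integral {1/4..1} (B 0)"
    unfolding K0_def by (rule Henstock_Kurzweil_Integration.integral_combine[symmetric]) (auto intro: B_int)
  also have "integral {1/4..1} (B 0) = integral {1/4..3/4} (B 0) + integral {3/4..1} (B 0)"
    by (rule Henstock_Kurzweil_Integration.integral_combine[symmetric]) (auto intro: B_int)
  finally have "K0 = integral {0..1/4} (B 0) + (integral {1/4..3/4} (B 0) + integral {3/4..1} (B 0))" .
  moreover have "exp (-6) / 2 > (0::real)" by simp
  ultimately show ?thesis using a b c by linarith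
qed

definition SS :: "real \<Rightarrow> real" where "SS s = integral {-1..s} (B 0) / K0"

lemma SS_neg: "t \<le> 0 \<Longrightarrow> SS t = 0"
  unfolding SS_def by (subst int_zero) (auto intro: B_out)

lemma SS_one: "1 \<le> t \<Longrightarrow> SS t = 1"
proof -
  assume t: "1 \<le> t"
  have "integral {-1..t} (B 0) = integral {-1..0} (B 0) + integral {0..t} (B 0)"
    by (rule Henstock_Kurzweil_Integration.integral_combine[symmetric]) (use t in \<open>auto intro: B_int\<close>)
  also have "integral {0..t} (B 0) = integral {0..1} (B 0) + integral {1..t} (B 0)"
    by (rule Henstock_Kurzweil_Integration.integral_combine[symmetric]) (use t in \<open>auto intro: B_int\<close>)
  also have "integral {-1..0} (B 0) = 0" by (rule int_zero) (auto intro: B_out)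
  also have "integral {1..t} (B 0) = 0" by (rule int_zero) (auto intro: B_out)
  finally show ?thesis using K0_pos unfolding SS_def K0_def by simp
qed

lemma SS_bounds: "0 \<le> SS t \<and> SS t \<le> 1"
proof (cases "t \<le> 0 \<or> 1 \<le> t")
  case True thus ?thesis using SS_neg SS_one by auto
next
  case False
  have a: "integral {-1..t} (B 0) \<ge> 0" by (rule integral_nonneg[OF B_int]) (simp add: B0_nonneg)
  have b: "integral {t..1} (B 0) \<ge> 0" by (rule integral_nonneg[OF B_int]) (simp add: B0_nonneg)
  have "integral {-1..t} (B 0) + integral {t..1} (B 0) = integral {-1..1} (B 0)"
    by (rule Henstock_Kurzweil_Integration.integral_combine) (use False in \<open>auto intro: B_int\<close>)
  moreover have "integral {-1..1} (B 0) = K0" using SS_one[of 1] K0_pos unfolding SS_def by simp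
  ultimately show ?thesis using a b K0_pos unfolding SS_def by (simp add: divide_le_eq)
qed

lemma SS_deriv: "(SS has_real_derivative B 0 s / K0) (at s)"
proof (cases "s < 0")
  case True
  have "((\<lambda>_. 0) has_real_derivative 0) (at s)" by simp
  hence "(SS has_real_derivative 0) (at s)"
    by (rule has_field_derivative_transform_within_open[where S="{..<0}"]) (use True SS_neg in auto)
  thus ?thesis using True B_out by simp
next
  case False
  have "((\<lambda>x. integral {-1..x} (B 0)) has_real_derivative B 0 s) (at s within {-1..s+1})"
    by (rule integral_has_real_derivative) (use False B_cont in auto)
  moreover have "s \<in> interior {-1..s+1}" using False by simp
  hence "at s within {-1..s+1} = at s" by (rule at_within_interior)
  ultimately have "((\<lambda>x. integral {-1..x} (B 0)) has_real_derivative B 0 s) (at s)"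
    by simp
  thus ?thesis unfolding SS_def by (rule DERIV_cdivide)
qed

fun SD :: "nat \<Rightarrow> real \<Rightarrow> real" where
  "SD 0 = SS"
| "SD (Suc k) = (\<lambda>s. B k s / K0)"

lemma SD_deriv: "(SD k has_real_derivative SD (Suc k) s) (at s)"
proof (cases k)
  case 0 thus ?thesis using SS_deriv by simp
next
  case (Suc j) thus ?thesis using DERIV_cdivide[OF B_deriv[of j s], of K0] by simp
qed

lemma SD_out: "0 < k \<Longrightarrow> s \<le> 0 \<or> 1 \<le> s \<Longrightarrow> SD k s = 0"
  by (cases k) (auto simp: B_out)



definition gx :: "real \<Rightarrow> real" where "gx u = exp (- 1 / u)"

lemma gx_pos: "0 < gx u" by (simp add: gx_def)

lemma gx_mono: "0 < a \<Longrightarrow> a \<le> b \<Longrightarrow> gx a \<le> gx b"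
proof -
  assume "0 < a" "a \<le> b"
  hence "1 / b \<le> 1 / a" by (intro divide_left_mono) auto
  thus "gx a \<le> gx b" by (simp add: gx_def)
qed

lemma gx_le: "0 < u \<Longrightarrow> gx u \<le> fact m * u ^ m"
proof -
  assume u: "0 < u"
  have x: "(1 / u) ^ m / fact m \<le> exp (1 / u)" using u by (intro exp_lower) auto
  have "gx u = 1 / exp (1 / u)" by (simp add: gx_def exp_minus divide_inverse)
  also have "\<dots> \<le> fact m / (1 / u) ^ m" by (rule inv_bound[OF _ _ x]) (use u in auto)
  also have "\<dots> = fact m * u ^ m" by (simp add: power_one_over)
  finally show ?thesis .
qed

definition sg :: "'a::real_normed_field \<Rightarrow> 'a" where
  "sg w = (if w = 0 then 0 else of_real (norm w) / w)"

lemma sg_norm: "norm (sg w) \<le> 1"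
  by (simp add: sg_def norm_divide)

lemma sg_err: "norm (v * sg w - of_real (norm v)) \<le> 2 * norm (v - w)"
proof (cases "w = 0")
  case True thus ?thesis by (simp add: sg_def)
next
  case False
  have e: "w * sg w = of_real (norm w)" using False by (simp add: sg_def)
  have "v * sg w - of_real (norm v) = (v - w) * sg w + (w * sg w - of_real (norm v))"
    by (simp add: algebra_simps)
  hence "v * sg w - of_real (norm v) = (v - w) * sg w + (of_real (norm w) - of_real (norm v))"
    by (simp only: e)
  hence "norm (v * sg w - of_real (norm v)) \<le> norm ((v - w) * sg w) + norm (of_real (norm w) - of_real (norm v) :: 'a)"
    by (metis norm_triangle_ineq)
  also have "norm ((v - w) * sg w) \<le> norm (v - w)"
    using sg_norm[of w] by (simp add: norm_mult mult_left_le)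
  also have "norm (of_real (norm w) - of_real (norm v) :: 'a) = \<bar>norm w - norm v\<bar>"
    by (metis norm_of_real of_real_diff)
  also have "\<bar>norm w - norm v\<bar> \<le> norm (v - w)"
    by (metis norm_minus_commute norm_triangle_ineq3)
  finally show ?thesis by simp
qed

locale smn =
  fixes D :: "nat \<Rightarrow> real \<Rightarrow> 'a::real_normed_field"
  assumes der: "\<And>k t. t \<in> I_eps \<Longrightarrow> (D k has_vector_derivative D (Suc k) t) (at t within I_eps)"
begin

definition L :: "real \<Rightarrow> real" where "L a = Sup ((\<lambda>s. norm (D 1 s)) ` {a..1})"

lemma cont1: "0 < a \<Longrightarrow> continuous_on {a..1} (D k)"
proof -
  assume a: "0 < a"
  have "continuous_on I_eps (D k)"
    unfolding continuous_on_eq_continuous_within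
    using der has_vector_derivative_continuous by blast
  moreover have "{a..1} \<subseteq> I_eps" using a by (auto simp: I_eps_def)
  ultimately show ?thesis using continuous_on_subset by blast
qed

lemma bdd: "0 < a \<Longrightarrow> bdd_above ((\<lambda>s. norm (D 1 s)) ` {a..1})"
proof -
  assume a: "0 < a"
  have "compact ((\<lambda>s. norm (D 1 s)) ` {a..1})"
    by (intro compact_continuous_image continuous_on_norm cont1 a) auto
  thus ?thesis by (meson bounded_imp_bdd_above compact_imp_bounded)
qed

lemma L_bound: "0 < a \<Longrightarrow> s \<in> {a..1} \<Longrightarrow> norm (D 1 s) \<le> L a"
proof -
  assume a: "0 < a" and s: "s \<in> {a..1}"
  show ?thesis unfolding L_def by (rule cSup_upper[OF _ bdd[OF a]]) (use s in blast)
qed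

lemma L_nonneg: "0 < a \<Longrightarrow> a \<le> 1 \<Longrightarrow> 0 \<le> L a"
proof -
  assume "0 < a" "a \<le> 1"
  hence "norm (D 1 a) \<le> L a" by (intro L_bound) auto
  thus ?thesis using norm_ge_zero[of "D 1 a"] by linarith
qed

lemma L_mono: "0 < a \<Longrightarrow> a \<le> a' \<Longrightarrow> a' \<le> 1 \<Longrightarrow> L a' \<le> L a"
proof -
  assume a: "0 < a" "a \<le> a'" "a' \<le> 1"
  show ?thesis unfolding L_def
    by (rule cSup_subset_mono[OF _ bdd[OF a(1)]]) (use a in auto)
qed

lemma osc: "0 < a \<Longrightarrow> x \<in> {a..1} \<Longrightarrow> y \<in> {a..1} \<Longrightarrow> norm (D 0 x - D 0 y) \<le> L a * \<bar>x - y\<bar>"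
proof -
  assume a: "0 < a" and xy: "x \<in> {a..1}" "y \<in> {a..1}"
  have sub: "{a..1} \<subseteq> I_eps" using a by (auto simp: I_eps_def)
  have "norm (D 0 x - D 0 y) \<le> L a * norm (x - y)"
  proof (rule differentiable_bound[where f' = "\<lambda>s h. h *\<^sub>R D 1 s"])
    show "convex {a..1}" by simp
    fix s assume s: "s \<in> {a..1}"
    have "(D 0 has_vector_derivative D 1 s) (at s within I_eps)" using der[of s 0] s sub by auto
    hence "(D 0 has_derivative (\<lambda>h. h *\<^sub>R D 1 s)) (at s within I_eps)"
      by (simp add: has_vector_derivative_def)
    thus "(D 0 has_derivative (\<lambda>h. h *\<^sub>R D 1 s)) (at s within {a..1})"
      using has_derivative_subset sub by blast
    have "onorm (\<lambda>h. h *\<^sub>R D 1 s) = norm (D 1 s)"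
      using onorm_scaleR_left[of "\<lambda>h::real. h" "D 1 s"] by (simp add: onorm_id)
    thus "onorm (\<lambda>h. h *\<^sub>R D 1 s) \<le> L a" using L_bound[OF a s] by simp
  qed (use xy in auto)
  thus ?thesis by simp
qed

primrec tt :: "nat \<Rightarrow> real" where
  "tt 0 = 1"
| "tt (Suc n) = tt n - min (tt n / 2) (gx (tt n / 2) / (L (tt n / 2) + 1))"

declare tt.simps(2)[simp del]
lemmas ttS = tt.simps(2)

lemma tt_pos: "0 < tt n \<and> tt n \<le> 1"
proof (induction n)
  case 0 thus ?case by simp
next
  case (Suc n)
  have "0 \<le> gx (tt n / 2) / (L (tt n / 2) + 1)"
    using gx_pos L_nonneg[of "tt n / 2"] Suc by (intro divide_nonneg_pos) (auto intro: less_imp_le)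
  thus ?case using Suc by (auto simp: ttS)
qed

lemma step_pos: "0 < min (tt n / 2) (gx (tt n / 2) / (L (tt n / 2) + 1))"
  using gx_pos L_nonneg[of "tt n / 2"] tt_pos[of n] by (auto intro!: divide_pos_pos)

lemma tt_half: "tt n / 2 \<le> tt (Suc n)"
  using min.cobounded1[of "tt n / 2" "gx (tt n / 2) / (L (tt n / 2) + 1)"] by (simp add: ttS)

lemma tt_lt: "tt (Suc n) < tt n" using step_pos[of n] by (simp add: ttS)

lemma tt_decr: "m \<le> n \<Longrightarrow> tt n \<le> tt m"
proof (induction n rule: dec_induct)
  case base thus ?case by simp
next
  case (step n) thus ?case using tt_lt[of n] by linarith
qed

lemma tt_small: "0 < e \<Longrightarrow> \<exists>n. tt n < e"
proof (rule ccontr)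
  assume e: "0 < e" and "\<not> (\<exists>n. tt n < e)"
  hence ge: "\<And>n. e \<le> tt n" by (simp add: not_less)
  have e1: "e \<le> 1" using ge[of 0] by simp
  define \<delta> where "\<delta> = min (e / 2) (gx (e / 2) / (L (e / 2) + 1))"
  have dpos: "0 < \<delta>" unfolding \<delta>_def using gx_pos L_nonneg[of "e/2"] e e1
    by (auto intro!: divide_pos_pos)
  have step: "\<delta> \<le> tt n - tt (Suc n)" for n
  proof -
    have a: "e / 2 \<le> tt n / 2" using ge[of n] by simp
    have b: "tt n / 2 \<le> 1" using tt_pos[of n] by simp
    have L1: "L (tt n / 2) \<le> L (e / 2)" using L_mono[of "e/2" "tt n / 2"] a b e by simp
    have g1: "gx (e / 2) \<le> gx (tt n / 2)" using gx_mono[of "e/2" "tt n / 2"] a e by simp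
    have "gx (e / 2) / (L (e / 2) + 1) \<le> gx (tt n / 2) / (L (tt n / 2) + 1)"
      using L1 g1 gx_pos[of "e/2"] L_nonneg[of "tt n / 2"] tt_pos[of n]
      by (intro frac_le) auto
    hence "\<delta> \<le> min (tt n / 2) (gx (tt n / 2) / (L (tt n / 2) + 1))"
      unfolding \<delta>_def using a by linarith
    thus ?thesis by (simp add: ttS)
  qed
  have bound: "tt n \<le> 1 - real n * \<delta>" for n
  proof (induction n)
    case 0 thus ?case by simp
  next
    case (Suc n)
    have "real (Suc n) * \<delta> = real n * \<delta> + \<delta>" by (simp add: algebra_simps)
    thus ?case using Suc.IH step[of n] by linarith
  qed
  obtain n where "1 < real n * \<delta>" using dpos ex_less_of_nat_mult by blast
  thus False using bound[of n] tt_pos[of n] by linarith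
qed

lemma osc_seg:
  assumes "x \<in> {tt (Suc n)..tt n}" "y \<in> {tt (Suc n)..tt n}"
  shows "norm (D 0 x - D 0 y) \<le> gx (tt n / 2)"
proof -
  define a where "a = tt n / 2"
  have a: "0 < a" "a \<le> 1" using tt_pos[of n] by (auto simp: a_def)
  have xy: "x \<in> {a..1}" "y \<in> {a..1}" using assms tt_half[of n] tt_pos[of n] by (auto simp: a_def)
  have L0: "0 \<le> L a" using L_nonneg a by simp
  have "norm (D 0 x - D 0 y) \<le> L a * \<bar>x - y\<bar>" by (rule osc[OF a(1) xy])
  also have "\<bar>x - y\<bar> \<le> tt n - tt (Suc n)" using assms by auto
  also have "tt n - tt (Suc n) \<le> gx a / (L a + 1)" by (simp add: a_def ttS)
  finally have "norm (D 0 x - D 0 y) \<le> L a * (gx a / (L a + 1))" using L0 by (simp add: mult_left_mono)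
  also have "\<dots> \<le> gx a"
    using L0 gx_pos[of a] by (simp add: field_simps)
  finally show ?thesis by (simp add: a_def)
qed


definition c :: "nat \<Rightarrow> 'a" where "c n = sg (D 0 (tt n))"
definition h :: "nat \<Rightarrow> real" where "h n = tt n - tt (Suc n)"

lemma h_pos: "0 < h n" using tt_lt[of n] by (simp add: h_def)

definition T :: "nat \<Rightarrow> nat \<Rightarrow> real \<Rightarrow> 'a" where
  "T k n e = ((1 / h n) ^ k * SD k ((e - tt (Suc n)) / h n) - (if k = 0 then 1 else 0)) *\<^sub>R (c n - c (Suc n))"

lemma T_deriv: "(T k n has_vector_derivative T (Suc k) n e) (at e)"
proof -
  have d1: "((\<lambda>e. (e - tt (Suc n)) / h n) has_real_derivative 1 / h n) (at e)"
    using DERIV_cdivide[OF DERIV_diff[OF DERIV_ident DERIV_const[of "tt (Suc n)"]], of "h n"] by simp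
  have d2: "((\<lambda>e. SD k ((e - tt (Suc n)) / h n)) has_real_derivative SD (Suc k) ((e - tt (Suc n)) / h n) * (1 / h n)) (at e)"
    by (rule DERIV_chain2[OF SD_deriv d1])
  have d3: "((\<lambda>e. (1 / h n) ^ k * SD k ((e - tt (Suc n)) / h n) - (if k = 0 then 1 else 0)) has_real_derivative
      (1 / h n) ^ k * (SD (Suc k) ((e - tt (Suc n)) / h n) * (1 / h n))) (at e)"
    using DERIV_diff[OF DERIV_cmult[OF d2, of "(1 / h n) ^ k"] DERIV_const[of "if k = 0 then 1 else 0"]] by simp
  have "((\<lambda>e. ((1 / h n) ^ k * SD k ((e - tt (Suc n)) / h n) - (if k = 0 then 1 else 0)) *\<^sub>R (c n - c (Suc n)))
     has_vector_derivative (((1 / h n) ^ k * SD k ((e - tt (Suc n)) / h n) - (if k = 0 then 1 else 0)) *\<^sub>R 0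
       + ((1 / h n) ^ k * (SD (Suc k) ((e - tt (Suc n)) / h n) * (1 / h n))) *\<^sub>R (c n - c (Suc n)))) (at e)"
    by (rule has_vector_derivative_scaleR[OF d3 has_vector_derivative_const])
  moreover have hn: "h n \<noteq> 0" using h_pos[of n] by simp
  ultimately show ?thesis unfolding T_def by (simp add: mult.commute mult.left_commute)
qed

lemma T_zero: "tt n \<le> e \<Longrightarrow> T k n e = 0"
proof -
  assume e: "tt n \<le> e"
  have "1 \<le> (e - tt (Suc n)) / h n" using e h_pos[of n] by (simp add: h_def field_simps)
  thus ?thesis unfolding T_def using SS_one SD_out[of k] by (cases k) auto
qed

lemma T0_low: "e \<le> tt (Suc n) \<Longrightarrow> T 0 n e = c (Suc n) - c n"
proof -
  assume e: "e \<le> tt (Suc n)"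
  have "(e - tt (Suc n)) / h n \<le> 0" using e h_pos[of n] by (simp add: divide_nonpos_pos)
  thus ?thesis unfolding T_def using SS_neg by simp
qed

definition MM :: "real \<Rightarrow> nat" where "MM e = (LEAST M. tt M < e)"

lemma MM: "0 < e \<Longrightarrow> tt (MM e) < e"
  unfolding MM_def using tt_small by (rule LeastI_ex) 

lemma MM_le: "tt M < e \<Longrightarrow> MM e \<le> M"
  unfolding MM_def by (rule Least_le)

lemma MM_below: "n < MM e \<Longrightarrow> e \<le> tt n"
  using not_less_Least[of n "\<lambda>M. tt M < e"] by (simp add: MM_def not_less)

definition Z :: "nat \<Rightarrow> real \<Rightarrow> 'a" where
  "Z k e = (if k = 0 then c 0 else 0) + (\<Sum>n<MM e. T k n e)"

lemma Z_sum: "tt M < e \<Longrightarrow> Z k e = (if k = 0 then c 0 else 0) + (\<Sum>n<M. T k n e)"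
proof -
  assume M: "tt M < e"
  have le: "MM e \<le> M" by (rule MM_le[OF M])
  have "(\<Sum>n<MM e. T k n e) = (\<Sum>n<M. T k n e)"
  proof (rule sum.mono_neutral_left)
    show "\<forall>i\<in>{..<M} - {..<MM e}. T k i e = 0"
    proof
      fix i assume "i \<in> {..<M} - {..<MM e}"
      hence "MM e \<le> i" "i \<le> M" by auto
      hence "tt i \<le> tt (MM e)" by (intro tt_decr)
      moreover have "tt (MM e) < e" using M tt_pos[of M] by (intro MM) linarith
      ultimately show "T k i e = 0" by (intro T_zero) linarith
    qed
  qed (use le in auto)
  thus ?thesis unfolding Z_def by simp
qed

lemma Z_deriv:
  assumes e: "e \<in> I_eps"
  shows "(Z k has_vector_derivative Z (Suc k) e) (at e within I_eps)"
proof -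
  have e0: "0 < e" using e by (simp add: I_eps_def)
  define M where "M = MM e"
  have M: "tt M < e" using MM[OF e0] by (simp add: M_def)
  define F where "F = (\<lambda>x. (if k = 0 then c 0 else 0) + (\<Sum>n<M. T k n x))"
  have "(F has_vector_derivative (0 + (\<Sum>n<M. T (Suc k) n e))) (at e)"
    unfolding F_def
    by (intro has_vector_derivative_add has_vector_derivative_const has_vector_derivative_sum T_deriv)
  hence "(F has_vector_derivative Z (Suc k) e) (at e within I_eps)"
    using Z_sum[OF M, of "Suc k"] by (simp add: has_vector_derivative_at_within)
  thus ?thesis
  proof (rule has_vector_derivative_transform_within)
    show "0 < e - tt M" using M by simp
    show "e \<in> I_eps" by fact
    fix x' assume "x' \<in> I_eps" "dist x' e < e - tt M"
    hence "tt M < x'" by (auto simp: dist_real_def)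
    thus "F x' = Z k x'" unfolding F_def using Z_sum by simp
  qed
qed

lemma Z0_partial: "j \<le> n \<Longrightarrow> e \<le> tt n \<Longrightarrow> c 0 + (\<Sum>i<j. T 0 i e) = c j"
proof (induction j)
  case 0 thus ?case by simp
next
  case (Suc j)
  have "tt n \<le> tt (Suc j)" using Suc.prems by (intro tt_decr) simp
  hence "T 0 j e = c (Suc j) - c j" using Suc.prems by (intro T0_low) linarith
  moreover have "c 0 + (\<Sum>i<j. T 0 i e) = c j" using Suc by simp
  moreover have "c 0 + (\<Sum>i<Suc j. T 0 i e) = (c 0 + (\<Sum>i<j. T 0 i e)) + T 0 j e" by (simp add: add.assoc)
  ultimately show ?case by simp
qed

lemma Z_err:
  assumes e: "e \<in> I_eps"
  shows "norm (D 0 e * Z 0 e - of_real (norm (D 0 e))) \<le> 2 * gx e \<and> norm (Z 0 e) \<le> 1"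
proof -
  have e0: "0 < e" and e1: "e \<le> 1" using e by (auto simp: I_eps_def)
  have "MM e \<noteq> 0" using MM_below[of 0 e] MM[OF e0] e1 by (cases "MM e") auto
  then obtain n where n: "MM e = Suc n" by (cases "MM e") auto
  have lo: "tt (Suc n) < e" using MM[OF e0] n by simp
  have hi: "e \<le> tt n" using MM_below[of n e] n by simp
  define lm where "lm = SS ((e - tt (Suc n)) / h n)"
  have lam: "0 \<le> lm" "lm \<le> 1" using SS_bounds unfolding lm_def by auto
  have "Z 0 e = c 0 + (\<Sum>i<Suc n. T 0 i e)" unfolding Z_def n by simp
  also have "\<dots> = (c 0 + (\<Sum>i<n. T 0 i e)) + T 0 n e" by (simp add: add.assoc)
  also have "c 0 + (\<Sum>i<n. T 0 i e) = c n" using Z0_partial[of n n e] hi by simp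
  also have "T 0 n e = (lm - 1) *\<^sub>R (c n - c (Suc n))" unfolding T_def lm_def by simp
  finally have Ze: "Z 0 e = lm *\<^sub>R c n + (1 - lm) *\<^sub>R c (Suc n)"
    by (simp add: algebra_simps)
  let ?v = "D 0 e"
  have "?v * Z 0 e - of_real (norm ?v) =
     lm *\<^sub>R (?v * c n - of_real (norm ?v)) + (1 - lm) *\<^sub>R (?v * c (Suc n) - of_real (norm ?v))"
    unfolding Ze by (simp add: algebra_simps)
  hence "norm (?v * Z 0 e - of_real (norm ?v)) \<le>
      lm * norm (?v * c n - of_real (norm ?v)) + (1 - lm) * norm (?v * c (Suc n) - of_real (norm ?v))"
    using lam by (metis (no_types, lifting) abs_of_nonneg diff_ge_0_iff_ge norm_scaleR norm_triangle_ineq)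
  also have "\<dots> \<le> lm * (2 * gx (tt n / 2)) + (1 - lm) * (2 * gx (tt n / 2))"
  proof (intro add_mono mult_left_mono)
    have a: "norm (?v - D 0 (tt n)) \<le> gx (tt n / 2)"
      by (rule osc_seg) (use lo hi tt_lt[of n] in auto)
    have b: "norm (?v - D 0 (tt (Suc n))) \<le> gx (tt n / 2)"
      by (rule osc_seg) (use lo hi tt_lt[of n] in auto)
    show "norm (?v * c n - of_real (norm ?v)) \<le> 2 * gx (tt n / 2)"
      using sg_err[of ?v "D 0 (tt n)"] a unfolding c_def by linarith
    show "norm (?v * c (Suc n) - of_real (norm ?v)) \<le> 2 * gx (tt n / 2)"
      using sg_err[of ?v "D 0 (tt (Suc n))"] b unfolding c_def by linarith
  qed (use lam in auto)
  also have "\<dots> = 2 * gx (tt n / 2)" by (simp add: algebra_simps)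
  also have "\<dots> \<le> 2 * gx e"
    using gx_mono[of "tt n / 2" e] tt_pos[of n] tt_half[of n] lo by simp
  finally have err: "norm (?v * Z 0 e - of_real (norm ?v)) \<le> 2 * gx e" .
  have "norm (Z 0 e) \<le> lm * norm (c n) + (1 - lm) * norm (c (Suc n))"
    unfolding Ze using lam by (metis (no_types, lifting) abs_of_nonneg diff_ge_0_iff_ge norm_scaleR norm_triangle_ineq)
  also have "\<dots> \<le> lm * 1 + (1 - lm) * 1"
    using lam sg_norm unfolding c_def by (intro add_mono mult_left_mono) auto
  finally have "norm (Z 0 e) \<le> 1" by simp
  thus ?thesis using err by simp
qed

end


lemma negl_add:
  assumes "negligible_net f" "negligible_net g"
  shows "negligible_net (\<lambda>e. f e + g e)"
  unfolding negligible_net_def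
proof
  fix m
  from assms(1) obtain C1 e1 where 1: "e1 > 0" "\<forall>e\<in>{0<..e1}. e \<le> 1 \<longrightarrow> norm (f e) \<le> C1 * e ^ m"
    unfolding negligible_net_def by blast
  from assms(2) obtain C2 e2 where 2: "e2 > 0" "\<forall>e\<in>{0<..e2}. e \<le> 1 \<longrightarrow> norm (g e) \<le> C2 * e ^ m"
    unfolding negligible_net_def by blast
  have "\<forall>e\<in>{0<..min e1 e2}. e \<le> 1 \<longrightarrow> norm (f e + g e) \<le> (C1 + C2) * e ^ m"
  proof (intro ballI impI)
    fix e assume e: "e \<in> {0<..min e1 e2}" "e \<le> 1"
    have "norm (f e + g e) \<le> norm (f e) + norm (g e)" by (rule norm_triangle_ineq)
    also have "\<dots> \<le> C1 * e ^ m + C2 * e ^ m" using 1 2 e by (intro add_mono) auto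
    finally show "norm (f e + g e) \<le> (C1 + C2) * e ^ m" by (simp add: algebra_simps)
  qed
  moreover have "min e1 e2 > 0" using 1 2 by simp
  ultimately show "\<exists>C. \<exists>e0>0. \<forall>e\<in>{0<..e0}. e \<le> 1 \<longrightarrow> norm (f e + g e) \<le> C * e ^ m" by blast
qed

lemma negl_uminus:
  assumes "negligible_net f" shows "negligible_net (\<lambda>e. - f e)"
  using assms unfolding negligible_net_def by simp

lemma negl_diff:
  assumes "negligible_net f" "negligible_net g"
  shows "negligible_net (\<lambda>e. f e - g e)"
  using negl_add[OF assms(1) negl_uminus[OF assms(2)]] by simp

lemma negl_zero: "negligible_net (\<lambda>e. 0)"
  unfolding negligible_net_def by (intro allI exI[of _ 0] exI[of _ 1]) auto

lemma mod_negl_mult: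
  fixes r :: "real \<Rightarrow> 'a::real_normed_field"
  assumes "moderate_net r" "negligible_net n"
  shows "negligible_net (\<lambda>e. r e * n e)"
  unfolding negligible_net_def
proof
  fix m
  from assms(1) obtain N C e0 where 0: "e0 > 0" "\<forall>e\<in>{0<..e0}. e \<le> 1 \<longrightarrow> norm (r e) \<le> C * (1 / e) ^ N"
    unfolding moderate_net_def by blast
  from assms(2) obtain C' e1 where 1: "e1 > 0" "\<forall>e\<in>{0<..e1}. e \<le> 1 \<longrightarrow> norm (n e) \<le> C' * e ^ (m + N)"
    unfolding negligible_net_def by blast
  have "\<forall>e\<in>{0<..min e0 e1}. e \<le> 1 \<longrightarrow> norm (r e * n e) \<le> C * C' * e ^ m"
  proof (intro ballI impI)
    fix e assume e: "e \<in> {0<..min e0 e1}" "e \<le> 1"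
    have a: "norm (r e) \<le> C * (1 / e) ^ N" using 0 e by auto
    have b: "norm (n e) \<le> C' * e ^ (m + N)" using 1 e by auto
    have c: "0 \<le> C * (1 / e) ^ N" using a norm_ge_zero[of "r e"] by linarith
    have "norm (r e * n e) = norm (r e) * norm (n e)" by (simp add: norm_mult)
    also have "\<dots> \<le> (C * (1 / e) ^ N) * (C' * e ^ (m + N))"
      using a b c by (intro mult_mono) auto
    also have "\<dots> = C * C' * e ^ m" using e by (simp add: power_add field_simps)
    finally show "norm (r e * n e) \<le> C * C' * e ^ m" .
  qed
  moreover have "min e0 e1 > 0" using 0 1 by simp
  ultimately show "\<exists>C. \<exists>e0>0. \<forall>e\<in>{0<..e0}. e \<le> 1 \<longrightarrow> norm (r e * n e) \<le> C * e ^ m" by blast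
qed

lemma rel_sm_refl: "r \<in> EM_sm \<Longrightarrow> (r, r) \<in> rel_sm"
  unfolding rel_sm_def using negl_zero by simp

lemma rel_sm_sym: "(r, s) \<in> rel_sm \<Longrightarrow> (s, r) \<in> rel_sm"
  unfolding rel_sm_def using negl_uminus[of "\<lambda>e. r e - s e"] by auto

lemma rel_sm_trans: "(r, s) \<in> rel_sm \<Longrightarrow> (s, t) \<in> rel_sm \<Longrightarrow> (r, t) \<in> rel_sm"
  unfolding rel_sm_def using negl_add[of "\<lambda>e. r e - s e" "\<lambda>e. s e - t e"] by auto

lemma rel_co_refl: "r \<in> EM_co \<Longrightarrow> (r, r) \<in> rel_co"
  unfolding rel_co_def using negl_zero by simp

lemma rel_co_sym: "(r, s) \<in> rel_co \<Longrightarrow> (s, r) \<in> rel_co"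
  unfolding rel_co_def using negl_uminus[of "\<lambda>e. r e - s e"] by auto

lemma rel_co_trans: "(r, s) \<in> rel_co \<Longrightarrow> (s, t) \<in> rel_co \<Longrightarrow> (r, t) \<in> rel_co"
  unfolding rel_co_def using negl_add[of "\<lambda>e. r e - s e" "\<lambda>e. s e - t e"] by auto

lemma cls_sm_eq: "(r, s) \<in> rel_sm \<Longrightarrow> cls_sm r = cls_sm s"
  unfolding cls_sm_def using rel_sm_sym rel_sm_trans by blast

lemma cls_co_eq: "(r, s) \<in> rel_co \<Longrightarrow> cls_co r = cls_co s"
  unfolding cls_co_def using rel_co_sym rel_co_trans by blast

lemma carrier_Ksm: "carrier Ksm = EM_sm // rel_sm"
  by (simp add: Ksm_def)

lemma mult_Ksm: "X \<otimes>\<^bsub>Ksm\<^esub> Y = cls_sm (\<lambda>e. rep X e * rep Y e)"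
  by (simp add: Ksm_def)

lemma carrier_rep:
  assumes "X \<in> carrier Ksm"
  shows "rep X \<in> EM_sm" "rep X \<in> X" "X = cls_sm (rep X)"
proof -
  from assms obtain r0 where r0: "r0 \<in> EM_sm" "X = cls_sm r0"
    unfolding carrier_Ksm cls_sm_def by (auto elim!: quotientE)
  have "r0 \<in> X" using r0 rel_sm_refl unfolding cls_sm_def by auto
  hence X: "rep X \<in> X" unfolding rep_def by (metis someI)
  hence rel: "(r0, rep X) \<in> rel_sm" using r0 unfolding cls_sm_def by auto
  thus "rep X \<in> EM_sm" unfolding rel_sm_def by auto
  show "rep X \<in> X" by fact
  show "X = cls_sm (rep X)" using r0 cls_sm_eq[OF rel] by simp
qed

lemma cls_in_carrier: "z \<in> EM_sm \<Longrightarrow> cls_sm z \<in> carrier Ksm"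
  unfolding carrier_Ksm cls_sm_def by (rule quotientI)

lemma smooth_cont:
  assumes "smooth_net r" shows "continuous_on I_eps r"
proof -
  from assms obtain D where D: "\<forall>t\<in>I_eps. D 0 t = r t"
    "\<forall>k. \<forall>t\<in>I_eps. (D k has_vector_derivative D (Suc k) t) (at t within I_eps)"
    unfolding smooth_net_def by blast
  have "continuous_on I_eps (D 0)"
    unfolding continuous_on_eq_continuous_within
    using D(2) has_vector_derivative_continuous by blast
  thus ?thesis using D(1) continuous_on_cong by force
qed

lemma EM_sm_co: "r \<in> EM_sm \<Longrightarrow> r \<in> EM_co"
  unfolding EM_sm_def EM_co_def using smooth_cont by auto

lemma abs_EM_co:
  fixes r :: "real \<Rightarrow> 'a::real_normed_field"
  assumes "r \<in> EM_sm"
  shows "(\<lambda>e. of_real (norm (r e)) :: 'a) \<in> EM_co"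
proof -
  have c: "continuous_on I_eps r" using assms EM_sm_co EM_co_def by auto
  have "continuous_on I_eps (\<lambda>e. of_real (norm (r e)) :: 'a)"
    by (intro continuous_intros c)
  moreover have "moderate_net (\<lambda>e. of_real (norm (r e)) :: 'a)"
    using assms unfolding EM_sm_def moderate_net_def by simp
  ultimately show ?thesis unfolding EM_co_def by simp
qed

lemma core:
  fixes r :: "real \<Rightarrow> 'a::real_normed_field"
  assumes "smooth_net r"
  shows "\<exists>z. z \<in> EM_sm \<and> negligible_net (\<lambda>e. r e * z e - of_real (norm (r e)))"
proof -
  from assms obtain D :: "nat \<Rightarrow> real \<Rightarrow> 'a" where D: "\<forall>t\<in>I_eps. D 0 t = r t"
    "\<forall>k. \<forall>t\<in>I_eps. (D k has_vector_derivative D (Suc k) t) (at t within I_eps)"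
    unfolding smooth_net_def by blast
  interpret smn D using D(2) by unfold_locales blast
  have sm: "smooth_net (Z 0)"
    unfolding smooth_net_def using Z_deriv by blast
  have "\<forall>e\<in>{0<..1::real}. e \<le> 1 \<longrightarrow> norm (Z 0 e) \<le> 1 * (1 / e) ^ 0"
  proof (intro ballI impI)
    fix e assume "e \<in> {0<..1::real}" "e \<le> 1"
    hence "e \<in> I_eps" by (simp add: I_eps_def)
    thus "norm (Z 0 e) \<le> 1 * (1 / e) ^ 0" using Z_err by simp
  qed
  hence mo: "moderate_net (Z 0)"
    unfolding moderate_net_def by (intro exI[of _ 0] exI[of _ 1]) auto
  have "\<forall>e\<in>{0<..1::real}. e \<le> 1 \<longrightarrow> norm (r e * Z 0 e - of_real (norm (r e))) \<le> 2 * fact m * e ^ m" for m :: nat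
  proof (intro ballI impI)
    fix e :: real assume "e \<in> {0<..1::real}" "e \<le> 1"
    hence e: "e \<in> I_eps" "0 < e" by (auto simp: I_eps_def)
    have "norm (r e * Z 0 e - of_real (norm (r e))) \<le> 2 * gx e"
      using Z_err[OF e(1)] D(1) e(1) by simp
    also have "\<dots> \<le> 2 * (fact m * e ^ m)" using gx_le[OF e(2), of m] by simp
    finally show "norm (r e * Z 0 e - of_real (norm (r e))) \<le> 2 * fact m * e ^ m" by simp
  qed
  note bnd = this
  have ne: "negligible_net (\<lambda>e. r e * Z 0 e - of_real (norm (r e)))"
    unfolding negligible_net_def
  proof
    fix m :: nat
    show "\<exists>C. \<exists>e0>0. \<forall>e\<in>{0<..e0}. e \<le> 1 \<longrightarrow> norm (r e * Z 0 e - of_real (norm (r e))) \<le> C * e ^ m"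
      using bnd[of m] by (intro exI[of _ "2 * fact m"] exI[of _ 1]) auto
  qed
  show ?thesis using sm mo ne unfolding EM_sm_def by blast
qed

theorem lemma4p24:
  fixes J :: "(real \<Rightarrow> 'a::real_normed_field) set set"
    and x :: "(real \<Rightarrow> 'a) set"
  assumes "ideal J Ksm"
    and "x \<in> J"
  shows "abs_sm x \<in> J"
proof -
  interpret ideal J Ksm by fact
  have xc: "x \<in> carrier Ksm" using assms(2) a_subset by blast
  define r where "r = rep x"
  have rE: "r \<in> EM_sm" using carrier_rep[OF xc] r_def by simp
  then obtain z where z: "z \<in> EM_sm" "negligible_net (\<lambda>e. r e * z e - of_real (norm (r e)))"
    using core unfolding EM_sm_def by blast
  define w where "w = cls_sm z"
  have wc: "w \<in> carrier Ksm" using cls_in_carrier[OF z(1)] w_def by simp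
  define y where "y = x \<otimes>\<^bsub>Ksm\<^esub> w"
  have yJ: "y \<in> J" using I_r_closed[OF assms(2) wc] y_def by simp
  have yc: "y \<in> carrier Ksm" using yJ a_subset by blast
  define p where "p = (\<lambda>e. r e * rep w e)"
  have yp: "y = cls_sm p" unfolding y_def p_def r_def mult_Ksm ..
  have "rep y \<in> cls_sm p" using carrier_rep(2)[OF yc] yp by simp
  hence pr: "(p, rep y) \<in> rel_sm" unfolding cls_sm_def by simp
  have "rep w \<in> cls_sm z" using carrier_rep(2)[OF wc] w_def by simp
  hence zw: "(z, rep w) \<in> rel_sm" unfolding cls_sm_def by simp
  define f where "f = (\<lambda>e. of_real (norm (r e)) :: 'a)"
  have fco: "f \<in> EM_co" unfolding f_def by (rule abs_EM_co[OF rE])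
  have ryE: "rep y \<in> EM_sm" using carrier_rep(1)[OF yc] .
  have n1: "negligible_net (\<lambda>e. rep y e - p e)"
    using negl_uminus[of "\<lambda>e. p e - rep y e"] pr unfolding rel_sm_def by simp
  have n2: "negligible_net (\<lambda>e. r e * (rep w e - z e))"
    using mod_negl_mult[of r "\<lambda>e. rep w e - z e"] negl_uminus[of "\<lambda>e. z e - rep w e"] zw rE
    unfolding rel_sm_def EM_sm_def by simp
  have "negligible_net (\<lambda>e. (rep y e - p e) + r e * (rep w e - z e) + (r e * z e - f e))"
    using negl_add[OF negl_add[OF n1 n2] z(2)] unfolding f_def .
  hence "negligible_net (\<lambda>e. rep y e - f e)"
    unfolding p_def by (simp add: algebra_simps)
  hence "(rep y, f) \<in> rel_co" using EM_sm_co[OF ryE] fco unfolding rel_co_def by simp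
  hence tau: "tau_sm y = cls_co f" unfolding tau_sm_def by (rule cls_co_eq)
  have uniq: "y' = y" if y': "y' \<in> carrier Ksm" "tau_sm y' = cls_co f" for y' :: "(real \<Rightarrow> 'a) set"
  proof -
    have E': "rep y' \<in> EM_co" using EM_sm_co carrier_rep(1)[OF y'(1)] by blast
    have "cls_co (rep y') = cls_co (rep y)" using tau y'(2) unfolding tau_sm_def by simp
    moreover have "rep y' \<in> cls_co (rep y')" using rel_co_refl[OF E'] unfolding cls_co_def by simp
    ultimately have "(rep y, rep y') \<in> rel_co" unfolding cls_co_def by simp
    hence "(rep y, rep y') \<in> rel_sm" using ryE carrier_rep(1)[OF y'(1)]
      unfolding rel_co_def rel_sm_def by simp
    hence "cls_sm (rep y) = cls_sm (rep y')" by (rule cls_sm_eq)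
    thus ?thesis using carrier_rep(3)[OF yc] carrier_rep(3)[OF y'(1)] by simp
  qed
  have "abs_sm x = y"
    unfolding abs_sm_def
  proof (rule the_equality)
    show "y \<in> carrier Ksm \<and> tau_sm y = cls_co (\<lambda>e. of_real (norm (rep x e)))"
      using yc tau unfolding f_def r_def by simp
  next
    fix y' :: "(real \<Rightarrow> 'a) set" assume "y' \<in> carrier Ksm \<and> tau_sm y' = cls_co (\<lambda>e. of_real (norm (rep x e)))"
    thus "y' = y" using uniq unfolding f_def r_def by blast
  qed
  thus ?thesis using yJ by simp
qed
end
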